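(* Let $q>1$ and let $\rho$ be a positive $2\pi$-periodic $C^2$ function with $(\ln\rho)''(t)<\sqrt{q}/(1+\sqrt{q})$ for all $t$. For $\eta\in\mathbb{S}^1$ and $j,l\in\{1,2\}$ let $\mathcal{T}_{j,l}\eta$ be defined as follows: with $\eta_l=(-1)^{l-1}\eta$, $\theta_q=\arccos(1/\sqrt{q})$ and $h(\theta)=\frac{\sqrt{q}\sin\theta}{\sqrt{q}\cos\theta+1}$, the equation $(\ln\rho)'(\theta)=h(\theta-\theta_{\eta_l})$ has exactly two solutions $\theta\in\mathbb{R}/(2\pi\mathbb{Z})$; $\mathcal{T}_{1,l}\eta$ is the one with $\theta-\theta_{\eta_l}\in(\theta_q-\pi,\pi-\theta_q)$ and $\mathcal{T}_{2,l}\eta$ the one with $\theta-\theta_{\eta_l}\in(\pi-\theta_q,\pi+\theta_q)$ (mod $2\pi$). Then for each $j,l\in\{1,2\}$, $\mathcal{T}_{j,l}:\mathbb{S}^1\to\mathbb{S}^1$ is a bijection, and, viewed as a map $\mathbb{R}/(2\pi\mathbb{Z})\to\mathbb{R}/(2\pi\mathbb{Z})$ via $\eta\leftrightarrow\theta_\eta$, it is $C^1$ and locally strictly increasing.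
   Context: We identify $\mathbb{S}^1$ with $\mathbb{R}/(2\pi\mathbb{Z})$ via $\theta\mapsto(\cos\theta,\sin\theta)^T$; $\theta_\eta$ denotes the angular coordinate of $\eta$. "Locally strictly increasing" (and $C^1$) means: for any $t_0\in\mathbb{R}$ and $\kappa\in\mathbb{Z}$, the lift $\mathcal{T}_{j,l}:(t_0,t_0+2\pi)\to(\theta_0+2\kappa\pi,\theta_0+2(\kappa+1)\pi)$, with $\theta_0$ a representative of $\mathcal{T}_{j,l}t_0$, is strictly increasing and $C^1$. *)

theory Defs
  imports "HOL-Analysis.Analysis"
begin

text \<open>Angles are real numbers, understood modulo 2 pi; the circle point of angle t is cis t.\<close>

definition theta_q :: "real \<Rightarrow> real" where
  "theta_q q = arccos (1 / sqrt q)"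

definition hfun :: "real \<Rightarrow> real \<Rightarrow> real" where
  "hfun q \<theta> = sqrt q * sin \<theta> / (sqrt q * cos \<theta> + 1)"

definition in_mod2pi :: "real \<Rightarrow> real \<Rightarrow> real \<Rightarrow> bool" where
  "in_mod2pi x a b \<longleftrightarrow> (\<exists>k::int. a < x + 2 * pi * of_int k \<and> x + 2 * pi * of_int k < b)"

text \<open>theta solves (ln rho)'(theta) = h(theta - psi), where psi is the angle of eta_l
  (h must be defined there, i.e. its denominator is nonzero)\<close>
definition is_sol :: "(real \<Rightarrow> real) \<Rightarrow> real \<Rightarrow> real \<Rightarrow> real \<Rightarrow> bool" where
  "is_sol \<rho> q \<psi> \<theta> \<longleftrightarrow>
     sqrt q * cos (\<theta> - \<psi>) + 1 \<noteq> 0 \<and> deriv (\<lambda>t. ln (\<rho> t)) \<theta> = hfun q (\<theta> - \<psi>)"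

definition sol_j :: "(real \<Rightarrow> real) \<Rightarrow> real \<Rightarrow> nat \<Rightarrow> real \<Rightarrow> real \<Rightarrow> bool" where
  "sol_j \<rho> q j \<psi> \<theta> \<longleftrightarrow> is_sol \<rho> q \<psi> \<theta> \<and>
     (if j = 1 then in_mod2pi (\<theta> - \<psi>) (theta_q q - pi) (pi - theta_q q)
      else in_mod2pi (\<theta> - \<psi>) (pi - theta_q q) (pi + theta_q q))"

text \<open>T_{j,l} on angles: phi is the angle of eta, eta_l = (-1)^(l-1) eta has angle phi + (l-1) pi;
  the value is the representative in [0, 2 pi).\<close>
definition ang_T :: "(real \<Rightarrow> real) \<Rightarrow> real \<Rightarrow> nat \<Rightarrow> nat \<Rightarrow> real \<Rightarrow> real" where
  "ang_T \<rho> q j l \<phi> =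
     (THE \<theta>. \<theta> \<in> {0..<2*pi} \<and> sol_j \<rho> q j (\<phi> + real (l - 1) * pi) \<theta>)"

text \<open>T_{j,l} as a map of the unit circle (identified with complex numbers of modulus 1)\<close>
definition circ_T :: "(real \<Rightarrow> real) \<Rightarrow> real \<Rightarrow> nat \<Rightarrow> nat \<Rightarrow> complex \<Rightarrow> complex" where
  "circ_T \<rho> q j l \<eta> = cis (ang_T \<rho> q j l (Arg \<eta>))"

end

theory Submission
  imports Defs
begin

lemma periodic_int:
  fixes p :: "real \<Rightarrow> 'a"
  assumes "\<And>t. p (t + 2*pi) = p t"
  shows "p (t + 2*pi * of_int k) = p t"
proof -
  have nat: "p (u + 2*pi * real n) = p u" for u n
  proof (induction n)
    case 0 then show ?case by simp
  next
    case (Suc n)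
    have "p (u + 2*pi * real (Suc n)) = p ((u + 2*pi * real n) + 2*pi)" by (simp add: algebra_simps)
    also have "\<dots> = p u" using assms Suc by simp
    finally show ?case .
  qed
  show ?thesis
  proof (cases "k \<ge> 0")
    case True
    then obtain n where "k = int n" using nonneg_int_cases by blast
    then show ?thesis using nat by simp
  next
    case False
    then have "-k \<ge> 0" by simp
    then obtain n where "-k = int n" using nonneg_int_cases by blast
    then have n: "k = - int n" by simp
    have "p (t + 2*pi * of_int k) = p ((t + 2*pi * of_int k) + 2*pi * real n)" using nat by simp
    also have "(t + 2*pi * of_int k) + 2*pi * real n = t" using n by simp
    finally show ?thesis .
  qed
qed

lemma hder:
  assumes "q > 1" "sqrt q * cos x + 1 \<noteq> 0"
  shows "(hfun q has_real_derivative (sqrt q * (sqrt q + cos x) / (sqrt q * cos x + 1)^2)) (at x)"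
proof -
  have e: "hfun q = (\<lambda>x. sqrt q * sin x / (sqrt q * cos x + 1))" by (simp add: hfun_def fun_eq_iff)
  have d1: "((\<lambda>x. sqrt q * sin x) has_real_derivative sqrt q * cos x) (at x)"
    by (auto intro!: derivative_eq_intros)
  have d2: "((\<lambda>x. sqrt q * cos x + 1) has_real_derivative sqrt q * (- sin x)) (at x)"
    by (auto intro!: derivative_eq_intros)
  have eq: "(sqrt q * cos x * (sqrt q * cos x + 1) - sqrt q * sin x * (sqrt q * (- sin x))) /
      ((sqrt q * cos x + 1) * (sqrt q * cos x + 1)) = sqrt q * (sqrt q + cos x) / (sqrt q * cos x + 1)^2"
  proof -
    have "sqrt q * cos x * (sqrt q * cos x + 1) - sqrt q * sin x * (sqrt q * (- sin x))
       = sqrt q * sqrt q * ((sin x)^2 + (cos x)^2) + sqrt q * cos x" by algebra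
    also have "\<dots> = sqrt q * (sqrt q + cos x)" unfolding sin_cos_squared_add by (simp add: algebra_simps)
    finally show ?thesis by (simp add: power2_eq_square)
  qed
  show ?thesis unfolding e using DERIV_divide[OF d1 d2 assms(2)] eq by simp
qed

lemma thq: assumes "q > 1" shows "0 < theta_q q" "theta_q q < pi" "cos (theta_q q) = 1 / sqrt q"
proof -
  have a0: "0 < 1 / sqrt q" using assms by simp
  have a1: "-1 < 1 / sqrt q" using a0 by linarith
  have a2: "1 / sqrt q < 1" using assms by simp
  note a = a1 a2
  show "0 < theta_q q" "theta_q q < pi" "cos (theta_q q) = 1 / sqrt q"
    using arccos_lt_bounded[OF a] cos_arccos[of "1/sqrt q"] a unfolding theta_q_def by auto
qed

lemma br1:
  assumes "q > 1"
  shows "(theta_q q - pi < x \<and> x < pi - theta_q q) \<longleftrightarrow> (-pi < x \<and> x < pi \<and> sqrt q * cos x + 1 > 0)"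
proof -
  note t = thq[OF assms]
  have s: "sqrt q > 0" using assms by auto
  have c: "cos (pi - theta_q q) = - 1 / sqrt q" using t by simp
  have "- 1 / sqrt q < cos x \<longleftrightarrow> - 1 < cos x * sqrt q" by (rule pos_divide_less_eq[OF s])
  then have "sqrt q * cos x + 1 > 0 \<longleftrightarrow> cos x > - 1 / sqrt q" by (auto simp: mult.commute)
  moreover have "-pi < x \<and> x < pi \<Longrightarrow> (cos \<bar>x\<bar> > cos (pi - theta_q q) \<longleftrightarrow> \<bar>x\<bar> < pi - theta_q q)"
    using t by (intro cos_mono_less_eq) auto
  ultimately show ?thesis using t c by (auto simp: abs_less_iff)
qed

lemma br2:
  assumes "q > 1"
  shows "(pi - theta_q q < x \<and> x < pi + theta_q q) \<longleftrightarrow> (0 < x \<and> x < 2*pi \<and> sqrt q * cos x + 1 < 0)"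
proof -
  note t = thq[OF assms]
  have s: "sqrt q > 0" using assms by auto
  define c where "c = cos \<bar>x - pi\<bar>"
  have cx: "cos x = - c" unfolding c_def by (simp add: cos_diff)
  have e1: "1 / sqrt q < c \<longleftrightarrow> 1 < c * sqrt q" by (rule pos_divide_less_eq[OF s])
  have "sqrt q * cos x + 1 < 0 \<longleftrightarrow> 1 < c * sqrt q" unfolding cx by (auto simp: algebra_simps)
  moreover have "0 < x \<and> x < 2*pi \<Longrightarrow> (cos (theta_q q) < c \<longleftrightarrow> \<bar>x - pi\<bar> < theta_q q)"
    unfolding c_def using t by (intro cos_mono_less_eq) auto
  ultimately show ?thesis using t e1 by (auto simp: abs_less_iff)
qed

definition wq :: "real \<Rightarrow> real \<Rightarrow> real" where
  "wq q y = y / (sqrt q * sqrt (1 + y^2))"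
definition X1 :: "real \<Rightarrow> real \<Rightarrow> real" where
  "X1 q y = arctan y + arcsin (wq q y)"
definition X2 :: "real \<Rightarrow> real \<Rightarrow> real" where
  "X2 q y = (arctan y - arcsin (wq q y)) + pi"

lemma wq_facts:
  assumes "q > 1"
  shows "sqrt q * wq q y * sqrt (1 + y^2) = y" "(wq q y)^2 < 1" "-1 < wq q y" "wq q y < 1"
    "sqrt q * sqrt (1 + y^2) * sqrt (1 - (wq q y)^2) > 1"
proof -
  define r where "r = sqrt (1 + y^2)"
  define s where "s = sqrt q"
  have r: "r > 0" "r^2 = 1 + y^2" unfolding r_def by (auto simp: add_pos_nonneg)
  have s: "s > 1" "s^2 = q" unfolding s_def using assms by auto
  have w: "wq q y = y / (s * r)" unfolding wq_def r_def s_def by simp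
  show "sqrt q * wq q y * sqrt (1 + y^2) = y" using r s unfolding w by (simp add: r_def s_def)
  have w2: "(wq q y)^2 = y^2 / (q * (1 + y^2))" unfolding w using r s
    by (simp add: power_divide power_mult_distrib)
  have yq: "y^2 * 1 \<le> y^2 * q" by (rule mult_left_mono) (use assms in auto)
  have qe: "q * (1 + y^2) = q + y^2 * q" by (simp add: algebra_simps)
  have pos: "q * (1 + y^2) > 0" using assms by (simp add: add_pos_nonneg)
  have "y^2 < q * (1 + y^2)" using yq qe assms by linarith
  then show w21: "(wq q y)^2 < 1" unfolding w2 using pos by simp
  then have "\<bar>wq q y\<bar> < 1" using abs_square_less_1 by blast
  then show "-1 < wq q y" "wq q y < 1" by auto
  have "(s * r * sqrt (1 - (wq q y)^2))^2 = q * (1 + y^2) * (1 - (wq q y)^2)"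
    using w21 r s by (simp add: power_mult_distrib)
  also have "\<dots> = q * (1 + y^2) - y^2" unfolding w2 using pos
    by (simp add: field_simps)
  also have "\<dots> > 1" using yq qe assms by linarith
  finally have gt: "(s * r * sqrt (1 - (wq q y)^2))^2 > 1" .
  have nn: "s * r * sqrt (1 - (wq q y)^2) \<ge> 0" using r(1) s(1) w21 by (intro mult_nonneg_nonneg) auto
  show "sqrt q * sqrt (1 + y^2) * sqrt (1 - (wq q y)^2) > 1"
  proof (rule ccontr)
    assume "\<not> ?thesis"
    then have "s * r * sqrt (1 - (wq q y)^2) \<le> 1" unfolding s_def r_def by simp
    then have "(s * r * sqrt (1 - (wq q y)^2))^2 \<le> 1" using nn by (intro power_le_one)
    then show False using gt by simp
  qed
qed

lemma alg_X1:
  fixes r s w y cb sX cX :: real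
  assumes "r * sX = y * cb + w" "r * cX = cb - y * w" "s * w * r = y" "r^2 = 1 + y^2"
  shows "(s * cX + 1) * r^2 = s * r * cb + 1" "s * sX * r^2 = y * (s * cX + 1) * r^2"
  using assms by algebra+

lemma alg_X2:
  fixes r s w y cb sX cX :: real
  assumes "r * sX = w - y * cb" "r * cX = - (cb + y * w)" "s * w * r = y" "r^2 = 1 + y^2"
  shows "(s * cX + 1) * r^2 = 1 - s * r * cb" "s * sX * r^2 = y * (s * cX + 1) * r^2"
  using assms by algebra+

lemma X1_facts:
  assumes "q > 1"
  shows "hfun q (X1 q y) = y" "-pi < X1 q y" "X1 q y < pi" "sqrt q * cos (X1 q y) + 1 > 0"
proof -
  define r where "r = sqrt (1 + y^2)"
  define s where "s = sqrt q"
  define w where "w = wq q y"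
  define cb where "cb = sqrt (1 - w^2)"
  note wf = wq_facts[OF assms, of y, folded r_def s_def w_def, folded cb_def]
  have r: "r > 0" "r^2 = 1 + y^2" unfolding r_def by (auto simp: add_pos_nonneg)
  have s: "s > 1" unfolding s_def using assms by auto
  have sa: "sin (arctan y) = y / r" "cos (arctan y) = 1 / r" unfolding r_def
    by (simp_all add: sin_arctan cos_arctan)
  have w1: "-1 \<le> w" "w \<le> 1" using wf(3,4) by auto
  have sb: "sin (arcsin w) = w" "cos (arcsin w) = cb" unfolding cb_def
    using cos_arcsin[OF w1] sin_arcsin[OF w1] by auto
  have ab: "-(pi/2) < arctan y" "arctan y < pi/2" "-(pi/2) < arcsin w" "arcsin w < pi/2"
    using arctan_bounded[of y] arcsin_lt_bounded[of w] wf by auto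
  have X: "X1 q y = arctan y + arcsin w" unfolding X1_def w_def ..
  have sX: "r * sin (X1 q y) = y * cb + w" unfolding X sin_add sa sb using r by (simp add: field_simps)
  have cX: "r * cos (X1 q y) = cb - y * w" unfolding X cos_add sa sb using r by (simp add: field_simps)
  note A = alg_X1[OF sX cX wf(1) r(2)]
  have w2le: "w^2 \<le> 1" using wf(2) by linarith
  have cbnn: "cb \<ge> 0" unfolding cb_def using w2le by simp
  have r2: "r^2 > 0" using r(1) by simp
  have "(s * cos (X1 q y) + 1) * r^2 > 0" unfolding A(1) using r s cbnn by (simp add: add_nonneg_pos)
  then show D: "sqrt q * cos (X1 q y) + 1 > 0" unfolding s_def[symmetric] using r2
    by (simp add: zero_less_mult_iff)
  have "s * sin (X1 q y) = y * (s * cos (X1 q y) + 1)" using A(2) r2 by simp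
  then show "hfun q (X1 q y) = y" unfolding hfun_def s_def[symmetric] using D s_def
    by (simp add: divide_eq_eq)
  show "-pi < X1 q y" "X1 q y < pi" unfolding X using ab by auto
qed

lemma X2_facts:
  assumes "q > 1"
  shows "hfun q (X2 q y) = y" "0 < X2 q y" "X2 q y < 2*pi" "sqrt q * cos (X2 q y) + 1 < 0"
proof -
  define r where "r = sqrt (1 + y^2)"
  define s where "s = sqrt q"
  define w where "w = wq q y"
  define cb where "cb = sqrt (1 - w^2)"
  note wf = wq_facts[OF assms, of y, folded r_def s_def w_def, folded cb_def]
  have r: "r > 0" "r^2 = 1 + y^2" unfolding r_def by (auto simp: add_pos_nonneg)
  have s: "s > 1" unfolding s_def using assms by auto
  have sa: "sin (arctan y) = y / r" "cos (arctan y) = 1 / r" unfolding r_def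
    by (simp_all add: sin_arctan cos_arctan)
  have w1: "-1 \<le> w" "w \<le> 1" using wf(3,4) by auto
  have sb: "sin (arcsin w) = w" "cos (arcsin w) = cb" unfolding cb_def
    using cos_arcsin[OF w1] sin_arcsin[OF w1] by auto
  have ab: "-(pi/2) < arctan y" "arctan y < pi/2" "-(pi/2) < arcsin w" "arcsin w < pi/2"
    using arctan_bounded[of y] arcsin_lt_bounded[of w] wf by auto
  have X: "X2 q y = (arctan y - arcsin w) + pi" unfolding X2_def w_def ..
  have sX: "r * sin (X2 q y) = w - y * cb" unfolding X sin_periodic_pi sin_diff sa sb using r by (simp add: field_simps)
  have cX: "r * cos (X2 q y) = - (cb + y * w)" unfolding X cos_periodic_pi cos_diff sa sb using r by (simp add: field_simps)
  note A = alg_X2[OF sX cX wf(1) r(2)]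
  have r2: "r^2 > 0" using r(1) by simp
  have "(s * cos (X2 q y) + 1) * r^2 < 0" unfolding A(1) using wf(5) by simp
  then show D: "sqrt q * cos (X2 q y) + 1 < 0" unfolding s_def[symmetric] using r2
    by (simp add: mult_less_0_iff)
  have "s * sin (X2 q y) = y * (s * cos (X2 q y) + 1)" using A(2) r2 by simp
  then show "hfun q (X2 q y) = y" unfolding hfun_def s_def[symmetric] using D s_def
    by (simp add: divide_eq_eq)
  show "0 < X2 q y" "X2 q y < 2*pi" unfolding X using ab by auto
qed

definition inI :: "real \<Rightarrow> nat \<Rightarrow> real \<Rightarrow> bool" where
  "inI q j x = (if j = 1 then theta_q q - pi < x \<and> x < pi - theta_q q
                else pi - theta_q q < x \<and> x < pi + theta_q q)"
definition Xj :: "real \<Rightarrow> nat \<Rightarrow> real \<Rightarrow> real" where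
  "Xj q j y = (if j = 1 then X1 q y else X2 q y)"
definition hd :: "real \<Rightarrow> real \<Rightarrow> real" where
  "hd q x = sqrt q * (sqrt q + cos x) / (sqrt q * cos x + 1)^2"

lemma inI_D: assumes "q > 1" "inI q j x" shows "sqrt q * cos x + 1 \<noteq> 0"
  using assms br1[OF assms(1), of x] br2[OF assms(1), of x] unfolding inI_def
  by (cases "j = 1") auto

lemma Xj_in: assumes "q > 1" "j \<in> {1,2}" shows "inI q j (Xj q j y)" "hfun q (Xj q j y) = y"
  using assms X1_facts[OF assms(1), of y] X2_facts[OF assms(1), of y]
    br1[OF assms(1), of "X1 q y"] br2[OF assms(1), of "X2 q y"]
  unfolding inI_def Xj_def by auto

lemma hd_pos: assumes "q > 1" "sqrt q * cos x + 1 \<noteq> 0" shows "hd q x > 0"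
proof -
  have "sqrt q > 1" using assms by simp
  moreover have "cos x \<ge> -1" by simp
  ultimately have "sqrt q + cos x > 0" by linarith
  then show ?thesis unfolding hd_def using assms by simp
qed

lemma hd_ge: assumes "q > 1" "sqrt q * cos x + 1 \<noteq> 0" shows "hd q x \<ge> sqrt q / (1 + sqrt q)"
proof -
  define s where "s = sqrt q"
  define u where "u = cos x"
  have s: "s > 1" unfolding s_def using assms by simp
  have u: "-1 \<le> u" "u \<le> 1" unfolding u_def by auto
  have D2: "(s * u + 1)^2 > 0" using assms unfolding s_def u_def by simp
  have id: "(s + u) * (1 + s) - (s * u + 1)^2 = (1 - u) * (s^2 * (1 + u) + s - 1)" by algebra
  have h0: "s^2 * (1 + u) \<ge> 0" using u by simp
  have h1: "s^2 * (1 + u) + s - 1 \<ge> 0" using h0 s by linarith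
  have "(1 - u) * (s^2 * (1 + u) + s - 1) \<ge> 0" using u h1 by (intro mult_nonneg_nonneg) auto
  then have key: "(s * u + 1)^2 \<le> (s + u) * (1 + s)" using id by linarith
  have "s / (1 + s) * (s * u + 1)^2 = s * (s * u + 1)^2 / (1 + s)" by simp
  also have "\<dots> \<le> s * (s + u)"
  proof -
    have "s * (s * u + 1)^2 \<le> s * ((s + u) * (1 + s))" using key s by (intro mult_left_mono) auto
    then show ?thesis using s by (simp add: pos_divide_le_eq algebra_simps)
  qed
  finally have "s / (1 + s) \<le> s * (s + u) / (s * u + 1)^2" using D2 by (simp add: pos_le_divide_eq)
  then show ?thesis unfolding hd_def s_def u_def .
qed

lemma h_mono: assumes "q > 1" "inI q j a" "inI q j b" "a < b" shows "hfun q a < hfun q b"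
proof (rule DERIV_pos_imp_increasing[OF assms(4)])
  fix x assume x: "a \<le> x" "x \<le> b"
  have "inI q j x" using assms(2,3) x unfolding inI_def by (cases "j = 1") auto
  then have D: "sqrt q * cos x + 1 \<noteq> 0" using inI_D assms(1) by blast
  show "\<exists>y. DERIV (hfun q) x :> y \<and> y > 0"
    using hder[OF assms(1) D] hd_pos[OF assms(1) D] unfolding hd_def by blast
qed

lemma h_uniq: assumes "q > 1" "j \<in> {1,2}" "inI q j x" "hfun q x = y" shows "x = Xj q j y"
proof -
  note z = Xj_in[OF assms(1,2), of y]
  show ?thesis
  proof (rule linorder_cases[of x "Xj q j y"])
    assume "x < Xj q j y" then show ?thesis using h_mono[OF assms(1,3) z(1)] z(2) assms(4) by simp
  next
    assume "Xj q j y < x" then show ?thesis using h_mono[OF assms(1) z(1) assms(3)] z(2) assms(4) by simp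
  qed
qed

lemma wq_cont: assumes "q > 1" shows "isCont (wq q) y"
proof -
  have e: "wq q = (\<lambda>y. y / (sqrt q * sqrt (1 + y^2)))" by (simp add: wq_def fun_eq_iff)
  have p: "1 + y^2 > 0" by (simp add: add_pos_nonneg)
  have "sqrt q * sqrt (1 + y^2) \<noteq> 0" using assms p by simp
  then show ?thesis unfolding e by (intro continuous_intros) auto
qed

lemma Xj_cont: assumes "q > 1" "j \<in> {1,2}" shows "isCont (Xj q j) y"
proof -
  have a: "isCont (\<lambda>y. arcsin (wq q y)) y"
    by (rule isCont_o2[OF wq_cont[OF assms(1)] isCont_arcsin]) (use wq_facts[OF assms(1), of y] in auto)
  have c1: "isCont (X1 q) y" unfolding X1_def[abs_def] using a by (intro continuous_intros isCont_arctan) auto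
  have c2: "isCont (X2 q) y" unfolding X2_def[abs_def] using a by (intro continuous_intros isCont_arctan) auto
  have "Xj q j = (if j = 1 then X1 q else X2 q)" by (simp add: Xj_def fun_eq_iff)
  then show ?thesis using c1 c2 by simp
qed

lemma Xj_der: assumes "q > 1" "j \<in> {1,2}" shows "DERIV (Xj q j) y :> inverse (hd q (Xj q j y))"
proof -
  note z = Xj_in[OF assms]
  have D: "sqrt q * cos (Xj q j y) + 1 \<noteq> 0" using inI_D[OF assms(1) z(1)] .
  show ?thesis
  proof (rule DERIV_inverse_function[where f="hfun q" and g="Xj q j" and x=y and a="y - 1" and b="y + 1"])
    show "DERIV (hfun q) (Xj q j y) :> hd q (Xj q j y)" using hder[OF assms(1) D] unfolding hd_def .
    show "hd q (Xj q j y) \<noteq> 0" using hd_pos[OF assms(1) D] by simp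
    show "isCont (Xj q j) y" using Xj_cont[OF assms] .
    show "hfun q (Xj q j y') = y'" for y' using Xj_in[OF assms] by simp
  qed auto
qed

lemma Xd_cont: assumes "q > 1" "j \<in> {1,2}" shows "isCont (\<lambda>y. inverse (hd q (Xj q j y))) y"
proof -
  note z = Xj_in[OF assms]
  have D: "sqrt q * cos (Xj q j y) + 1 \<noteq> 0" using inI_D[OF assms(1) z(1)] .
  have P: "hd q (Xj q j y) \<noteq> 0" using hd_pos[OF assms(1) D] by simp
  have C: "isCont (Xj q j) y" using Xj_cont[OF assms] .
  show ?thesis unfolding hd_def
    apply (intro continuous_intros C)
    using D P unfolding hd_def by auto
qed

lemma Xd_bounds: assumes "q > 1" "j \<in> {1,2}"
  shows "inverse (hd q (Xj q j y)) > 0" "inverse (hd q (Xj q j y)) \<le> (1 + sqrt q) / sqrt q"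
proof -
  note z = Xj_in[OF assms]
  have D: "sqrt q * cos (Xj q j y) + 1 \<noteq> 0" using inI_D[OF assms(1) z(1)] .
  have P: "hd q (Xj q j y) > 0" using hd_pos[OF assms(1) D] .
  show "inverse (hd q (Xj q j y)) > 0" using P by simp
  have G: "hd q (Xj q j y) \<ge> sqrt q / (1 + sqrt q)" using hd_ge[OF assms(1) D] .
  have sp: "sqrt q / (1 + sqrt q) > 0" using assms by (simp add: add_pos_pos)
  have "inverse (hd q (Xj q j y)) \<le> inverse (sqrt q / (1 + sqrt q))"
    using G sp by (rule le_imp_inverse_le)
  then show "inverse (hd q (Xj q j y)) \<le> (1 + sqrt q) / sqrt q" by simp
qed

lemma shift_int:
  fixes G :: "real \<Rightarrow> real"
  assumes "\<And>x. G (x + 2*pi) = G x + 2*pi"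
  shows "G (x + 2*pi * of_int k) = G x + 2*pi * of_int k"
proof -
  have "(\<lambda>t. G t - t) (x + 2*pi * of_int k) = (\<lambda>t. G t - t) x"
    by (rule periodic_int) (use assms in simp)
  then show ?thesis by simp
qed

lemma inv_lift:
  fixes G G' :: "real \<Rightarrow> real"
  assumes der: "\<And>x. DERIV G x :> G' x" and pos: "\<And>x. G' x > 0"
    and cont: "continuous_on UNIV G'"
    and per: "\<And>x. G (x + 2*pi) = G x + 2*pi"
  shows "strict_mono G" "bij G" "\<And>y. G (inv G y) = y" "\<And>x. inv G (G x) = x"
    "\<And>y. DERIV (inv G) y :> inverse (G' (inv G y))"
    "continuous_on UNIV (\<lambda>y. inverse (G' (inv G y)))"
    "strict_mono (inv G)" "\<And>y. inv G (y + 2*pi) = inv G y + 2*pi"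
proof -
  show sm: "strict_mono G"
    unfolding strict_mono_def using der pos by (metis DERIV_pos_imp_increasing)
  have cG: "isCont G x" for x using der DERIV_isCont by blast
  have inj: "inj G" using sm strict_mono_imp_inj_on by blast
  have surj: "surj G"
  proof -
    have "\<exists>x. G x = y" for y
    proof -
      define n where "n = floor ((y - G 0) / (2*pi))"
      have G2: "G (2*pi * of_int m) = G 0 + 2*pi * of_int m" for m :: int
        using shift_int[of G 0 m] per by simp
      have "of_int n \<le> (y - G 0) / (2*pi)" "(y - G 0) / (2*pi) < of_int n + 1"
        unfolding n_def by linarith+
      then have a: "2*pi * of_int n \<le> y - G 0" "y - G 0 < 2*pi * (of_int n + 1)"
        using pi_gt_zero by (simp_all add: field_simps)
      have "G (2*pi * of_int n) \<le> y" using a G2 by simp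
      moreover have "y \<le> G (2*pi * of_int (n+1))" using a G2[of "n+1"] by simp
      moreover have "2*pi * of_int n \<le> 2*pi * of_int (n+1)" by simp
      moreover have "continuous_on {2*pi * of_int n .. 2*pi * of_int (n+1)} G"
        using cG by (simp add: continuous_at_imp_continuous_on)
      ultimately show ?thesis using IVT'[of G] by blast
    qed
    then show ?thesis by (metis surjI)
  qed
  show "bij G" using inj surj by (simp add: bij_def)
  show GH: "G (inv G y) = y" for y using surj by (simp add: surj_f_inv_f)
  show HG: "inv G (G x) = x" for x using inj by simp
  have cH: "isCont (inv G) y" for y
  proof -
    have "isCont (inv G) (G (inv G y))"
      by (rule isCont_inverse_function[where d=1]) (auto simp: HG cG)
    then show ?thesis using GH by simp
  qed
  show "DERIV (inv G) y :> inverse (G' (inv G y))" for y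
    by (rule DERIV_inverse_function[where f=G and g="inv G" and x=y and a="y - 1" and b="y + 1"])
       (use der pos cH GH in \<open>auto simp: less_imp_neq[symmetric]\<close>)
  have cG': "isCont G' x" for x using cont by (simp add: continuous_on_eq_continuous_at)
  show "continuous_on UNIV (\<lambda>y. inverse (G' (inv G y)))"
    unfolding continuous_on_eq_continuous_at[OF open_UNIV]
  proof
    fix y :: real
    have "isCont (\<lambda>y. G' (inv G y)) y" by (rule isCont_o2[OF cH cG'])
    then show "isCont (\<lambda>y. inverse (G' (inv G y))) y"
      using pos by (intro continuous_intros) (auto simp: less_imp_neq[symmetric])
  qed
  show "strict_mono (inv G)"
    unfolding strict_mono_def
  proof (intro allI impI)
    fix a b :: real assume "a < b"
    show "inv G a < inv G b"
    proof (rule ccontr)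
      assume "\<not> inv G a < inv G b"
      then have "inv G b \<le> inv G a" by simp
      then have "G (inv G b) \<le> G (inv G a)" using sm by (simp add: strict_mono_less_eq)
      then show False using GH \<open>a < b\<close> by simp
    qed
  qed
  show "inv G (y + 2*pi) = inv G y + 2*pi" for y
  proof -
    have "G (inv G y + 2*pi) = y + 2*pi" using per GH by simp
    then show ?thesis using HG by metis
  qed
qed

definition rep :: "real \<Rightarrow> real" where
  "rep v = v - 2*pi * of_int (floor (v / (2*pi)))"

lemma rep_unique:
  "(\<theta> \<in> {0..<2*pi} \<and> (\<exists>k::int. \<theta> = v + 2*pi * of_int k)) \<longleftrightarrow> \<theta> = rep v"
proof
  assume "\<theta> \<in> {0..<2*pi} \<and> (\<exists>k::int. \<theta> = v + 2*pi * of_int k)"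
  then obtain k :: int where k: "0 \<le> \<theta>" "\<theta> < 2*pi" "\<theta> = v + 2*pi * of_int k" by auto
  have "0 \<le> v / (2*pi) + of_int k" "v / (2*pi) + of_int k < 1"
    using k pi_gt_zero by (simp_all add: field_simps)
  then have "floor (v / (2*pi)) = - k" by (intro floor_unique) auto
  then show "\<theta> = rep v" unfolding rep_def using k by simp
next
  assume t: "\<theta> = rep v"
  define n where "n = floor (v / (2*pi))"
  have "of_int n \<le> v / (2*pi)" "v / (2*pi) < of_int n + 1" unfolding n_def by linarith+
  then have "2*pi * of_int n \<le> v" "v < 2*pi * of_int n + 2*pi"
    using pi_gt_zero by (simp_all add: field_simps)
  then show "\<theta> \<in> {0..<2*pi} \<and> (\<exists>k::int. \<theta> = v + 2*pi * of_int k)"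
    unfolding t rep_def n_def[symmetric] by (intro conjI exI[of _ "-n"]) auto
qed

lemma rep_shift: "\<exists>k::int. rep v = v + 2*pi * of_int k"
  unfolding rep_def by (intro exI[of _ "- floor (v / (2*pi))"]) simp

lemma cis_shift: "cis (v + 2*pi * of_int k) = cis v"
proof -
  have "cis (2*pi * of_int k) = 1" by (rule cis_multiple_2pi) simp
  then show ?thesis by (simp add: cis_mult[symmetric])
qed

lemma cis_rep: "cis (rep v) = cis v"
  using rep_shift[of v] cis_shift by metis

lemma cis_eq: assumes "cis a = cis b" shows "\<exists>n::int. a = b + 2*pi * of_int n"
proof -
  have "sin a = sin b \<and> cos a = cos b" using arg_cong[OF assms, of Re] arg_cong[OF assms, of Im] by simp
  then obtain n :: int where "a = b + 2 * pi * n" using sin_cos_eq_iff by blast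
  then show ?thesis by blast
qed

lemma C1_deriv:
  fixes f :: "real \<Rightarrow> real"
  assumes "f C1_differentiable_on UNIV"
  shows "\<And>x. DERIV f x :> deriv f x" "continuous_on UNIV (deriv f)"
proof -
  obtain D where D: "\<And>x. (f has_vector_derivative D x) (at x)" "continuous_on UNIV D"
    using assms unfolding C1_differentiable_on_def by blast
  have d: "DERIV f x :> D x" for x using D(1) by (simp add: has_real_derivative_iff_has_vector_derivative)
  then have "deriv f x = D x" for x by (rule DERIV_imp_deriv)
  then have e: "deriv f = D" by (simp add: fun_eq_iff)
  show "DERIV f x :> deriv f x" for x using d e by simp
  show "continuous_on UNIV (deriv f)" using D(2) e by simp
qed

locale L5 =
  fixes q :: real and \<rho> :: "real \<Rightarrow> real"
  assumes q1: "q > 1" and pos: "\<forall>t. \<rho> t > 0" and per: "\<forall>t. \<rho> (t + 2 * pi) = \<rho> t"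
    and C1: "\<rho> C1_differentiable_on UNIV" and C2: "deriv \<rho> C1_differentiable_on UNIV"
    and bd: "\<forall>t. deriv (deriv (\<lambda>s. ln (\<rho> s))) t < sqrt q / (1 + sqrt q)"
begin

definition ff where "ff t = deriv \<rho> t / \<rho> t"
definition ff' where "ff' t = (deriv (deriv \<rho>) t * \<rho> t - deriv \<rho> t * deriv \<rho> t) / (\<rho> t * \<rho> t)"

lemma d1: "DERIV \<rho> x :> deriv \<rho> x" using C1_deriv[OF C1] by blast
lemma d2: "DERIV (deriv \<rho>) x :> deriv (deriv \<rho>) x" using C1_deriv[OF C2] by blast
lemma c2: "continuous_on UNIV (deriv (deriv \<rho>))" using C1_deriv[OF C2] by blast
lemma c0: "isCont \<rho> x" using d1 DERIV_isCont by blast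
lemma c1: "isCont (deriv \<rho>) x" using d2 DERIV_isCont by blast
lemma c2': "isCont (deriv (deriv \<rho>)) x" using c2 by (simp add: continuous_on_eq_continuous_at)

lemma dlog: "DERIV (\<lambda>s. ln (\<rho> s)) x :> ff x"
proof -
  have "DERIV (\<lambda>s. ln (\<rho> s)) x :> inverse (\<rho> x) * deriv \<rho> x"
    by (rule DERIV_chain2[OF DERIV_ln d1]) (use pos in auto)
  then show ?thesis unfolding ff_def by (simp add: divide_inverse mult.commute)
qed

lemma deriv_log: "deriv (\<lambda>s. ln (\<rho> s)) = ff"
proof (rule ext)
  fix x show "deriv (\<lambda>s. ln (\<rho> s)) x = ff x" using dlog by (rule DERIV_imp_deriv)
qed

lemma dff: "DERIV ff x :> ff' x"
proof -
  have e: "ff = (\<lambda>t. deriv \<rho> t / \<rho> t)" by (simp add: fun_eq_iff ff_def)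
  show ?thesis unfolding e ff'_def
    by (rule DERIV_divide[OF d2 d1]) (use pos in \<open>auto simp: less_imp_neq[symmetric]\<close>)
qed

lemma bd': "ff' t < sqrt q / (1 + sqrt q)"
proof -
  have "deriv ff t = ff' t" using dff by (rule DERIV_imp_deriv)
  then show ?thesis using bd deriv_log by metis
qed

lemma cff: "isCont ff x" using dff DERIV_isCont by blast

lemma cff': "isCont ff' x"
proof -
  have e: "ff' = (\<lambda>t. (deriv (deriv \<rho>) t * \<rho> t - deriv \<rho> t * deriv \<rho> t) / (\<rho> t * \<rho> t))"
    by (simp add: fun_eq_iff ff'_def)
  have "\<rho> x * \<rho> x \<noteq> 0" using pos by (auto simp: less_imp_neq[symmetric])
  then show ?thesis unfolding e by (intro continuous_intros c0 c1 c2')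
qed

lemma per_d: "deriv \<rho> (t + 2*pi) = deriv \<rho> t"
proof -
  have "((\<lambda>s. \<rho> (s + 2*pi)) has_field_derivative deriv \<rho> (t + 2*pi)) (at t)"
    using d1[of "t + 2*pi"] by (simp add: DERIV_shift)
  moreover have "(\<lambda>s. \<rho> (s + 2*pi)) = \<rho>" using per by (simp add: fun_eq_iff)
  ultimately have "DERIV \<rho> t :> deriv \<rho> (t + 2*pi)" by simp
  then show ?thesis using d1 DERIV_unique by blast
qed

lemma per_ff: "ff (t + 2*pi) = ff t" unfolding ff_def using per per_d by simp

definition GG where "GG j \<theta> = \<theta> - Xj q j (ff \<theta>)"
definition GG' where "GG' j \<theta> = 1 - ff' \<theta> * inverse (hd q (Xj q j (ff \<theta>)))"

lemma GG_der: assumes "j \<in> {1,2}" shows "DERIV (GG j) x :> GG' j x"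
proof -
  have "DERIV (\<lambda>x. Xj q j (ff x)) x :> inverse (hd q (Xj q j (ff x))) * ff' x"
    by (rule DERIV_chain2[OF Xj_der[OF q1 assms] dff])
  then have "DERIV (\<lambda>x. x - Xj q j (ff x)) x :> 1 - inverse (hd q (Xj q j (ff x))) * ff' x"
    by (intro derivative_intros)
  then show ?thesis unfolding GG'_def by (simp add: GG_def[abs_def] mult.commute)
qed

lemma GG'_pos: assumes "j \<in> {1,2}" shows "GG' j x > 0"
proof -
  define a where "a = ff' x"
  define b where "b = inverse (hd q (Xj q j (ff x)))"
  define s where "s = sqrt q"
  have s: "s > 1" unfolding s_def using q1 by simp
  have a: "a < s / (1 + s)" unfolding a_def s_def using bd' .
  have b: "b > 0" "b \<le> (1 + s) / s" unfolding b_def s_def using Xd_bounds[OF q1 assms] by auto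
  have "a * b < 1"
  proof (cases "a \<le> 0")
    case True
    then have "a * b \<le> 0" using b by (simp add: mult_nonpos_nonneg)
    then show ?thesis by simp
  next
    case False
    then have "a * b \<le> a * ((1 + s) / s)" using b by (intro mult_left_mono) auto
    also have "\<dots> < s / (1 + s) * ((1 + s) / s)" using a s by (intro mult_strict_right_mono) auto
    also have "\<dots> = 1" using s by simp
    finally show ?thesis .
  qed
  then show ?thesis unfolding GG'_def a_def b_def by simp
qed

lemma GG'_cont: assumes "j \<in> {1,2}" shows "continuous_on UNIV (GG' j)"
proof -
  have "isCont (GG' j) x" for x
  proof -
    have "isCont (\<lambda>x. inverse (hd q (Xj q j (ff x)))) x"
      by (rule isCont_o2[OF cff Xd_cont[OF q1 assms]])
    then have "isCont (\<lambda>x. 1 - ff' x * inverse (hd q (Xj q j (ff x)))) x"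
      by (rule continuous_diff[OF continuous_const continuous_mult[OF cff']])
    then show ?thesis unfolding GG'_def[abs_def] .
  qed
  then show ?thesis by (simp add: continuous_on_eq_continuous_at)
qed

lemma GG_per: "GG j (x + 2*pi) = GG j x + 2*pi"
  unfolding GG_def per_ff by simp

end

lemma hfun_per: "hfun q (x + 2*pi * of_int k) = hfun q x"
  by (rule periodic_int) (simp add: hfun_def)

lemma cos_per: "cos (x + 2*pi * of_int k) = cos x"
  by (rule periodic_int) simp

lemma branch_iff: assumes "j \<in> {1,2}"
  shows "(if j = 1 then in_mod2pi x (theta_q q - pi) (pi - theta_q q)
          else in_mod2pi x (pi - theta_q q) (pi + theta_q q)) \<longleftrightarrow> (\<exists>k::int. inI q j (x + 2*pi * of_int k))"
  using assms unfolding in_mod2pi_def inI_def by auto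

context L5 begin

lemma HH: assumes "j \<in> {1,2}"
  shows "strict_mono (GG j)" "bij (GG j)" "\<And>y. GG j (inv (GG j) y) = y" "\<And>x. inv (GG j) (GG j x) = x"
    "\<And>y. DERIV (inv (GG j)) y :> inverse (GG' j (inv (GG j) y))"
    "continuous_on UNIV (\<lambda>y. inverse (GG' j (inv (GG j) y)))"
    "strict_mono (inv (GG j))" "\<And>y. inv (GG j) (y + 2*pi) = inv (GG j) y + 2*pi"
  using inv_lift[of "GG j" "GG' j", OF GG_der[OF assms] GG'_pos[OF assms] GG'_cont[OF assms] GG_per]
  by auto

lemma GG_int: "GG j (x + 2*pi * of_int k) = GG j x + 2*pi * of_int k"
  by (rule shift_int) (rule GG_per)

lemma HH_int: assumes "j \<in> {1,2}" shows "inv (GG j) (x + 2*pi * of_int k) = inv (GG j) x + 2*pi * of_int k"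
  by (rule shift_int) (rule HH(8)[OF assms])

lemma sol_char: assumes j: "j \<in> {1,2}"
  shows "sol_j \<rho> q j \<psi> \<theta> \<longleftrightarrow> (\<exists>k::int. \<theta> = inv (GG j) \<psi> + 2*pi * of_int k)"
proof
  assume "sol_j \<rho> q j \<psi> \<theta>"
  then have s: "hfun q (\<theta> - \<psi>) = ff \<theta>" "\<exists>k::int. inI q j (\<theta> - \<psi> + 2*pi * of_int k)"
    unfolding sol_j_def is_sol_def deriv_log branch_iff[OF j] by auto
  then obtain k :: int where k: "inI q j (\<theta> - \<psi> + 2*pi * of_int k)" by blast
  have "hfun q (\<theta> - \<psi> + 2*pi * of_int k) = ff \<theta>" using s(1) hfun_per by simp
  then have "\<theta> - \<psi> + 2*pi * of_int k = Xj q j (ff \<theta>)" using h_uniq[OF q1 j k] by simp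
  then have "GG j \<theta> = \<psi> + 2*pi * of_int (-k)" unfolding GG_def by simp
  then have "\<theta> = inv (GG j) (\<psi> + 2*pi * of_int (-k))" using HH(4)[OF j, of \<theta>] by simp
  then show "\<exists>k::int. \<theta> = inv (GG j) \<psi> + 2*pi * of_int k" using HH_int[OF j] by blast
next
  assume "\<exists>k::int. \<theta> = inv (GG j) \<psi> + 2*pi * of_int k"
  then obtain k :: int where k: "\<theta> = inv (GG j) \<psi> + 2*pi * of_int k" by blast
  have "GG j \<theta> = \<psi> + 2*pi * of_int k" unfolding k GG_int HH(3)[OF j] ..
  then have x: "\<theta> - \<psi> = Xj q j (ff \<theta>) + 2*pi * of_int k" unfolding GG_def by simp
  note xi = Xj_in[OF q1 j, of "ff \<theta>"]
  have D: "sqrt q * cos (\<theta> - \<psi>) + 1 \<noteq> 0" unfolding x cos_per using inI_D[OF q1 xi(1)] .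
  have H: "hfun q (\<theta> - \<psi>) = ff \<theta>" unfolding x hfun_per using xi(2) .
  have B: "\<exists>k::int. inI q j (\<theta> - \<psi> + 2*pi * of_int k)"
    using xi(1) x by (intro exI[of _ "-k"]) simp
  show "sol_j \<rho> q j \<psi> \<theta>"
    unfolding sol_j_def is_sol_def deriv_log branch_iff[OF j] using D H B by simp
qed

lemma sol_excl: "\<not> (sol_j \<rho> q 1 \<psi> \<theta> \<and> sol_j \<rho> q 2 \<psi> \<theta>)"
proof
  assume "sol_j \<rho> q 1 \<psi> \<theta> \<and> sol_j \<rho> q 2 \<psi> \<theta>"
  then obtain k1 k2 :: int where k: "inI q 1 (\<theta> - \<psi> + 2*pi * of_int k1)" "inI q 2 (\<theta> - \<psi> + 2*pi * of_int k2)"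
    unfolding sol_j_def branch_iff[of 1, simplified] branch_iff[of 2, simplified] by auto
  have "sqrt q * cos (\<theta> - \<psi> + 2*pi * of_int k1) + 1 > 0" using k(1) br1[OF q1] unfolding inI_def by auto
  moreover have "sqrt q * cos (\<theta> - \<psi> + 2*pi * of_int k2) + 1 < 0" using k(2) br2[OF q1] unfolding inI_def by auto
  ultimately show False unfolding cos_per by simp
qed

lemma sol_split: "is_sol \<rho> q \<psi> \<theta> \<longleftrightarrow> sol_j \<rho> q 1 \<psi> \<theta> \<or> sol_j \<rho> q 2 \<psi> \<theta>"
proof
  assume S: "is_sol \<rho> q \<psi> \<theta>"
  define x where "x = \<theta> - \<psi>"
  define n where "n = floor ((x + pi) / (2*pi))"
  define z where "z = x + 2*pi * of_int (-n)"
  have "of_int n \<le> (x + pi) / (2*pi)" "(x + pi) / (2*pi) < of_int n + 1" unfolding n_def by linarith+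
  then have "2*pi * of_int n \<le> x + pi" "x + pi < 2*pi * of_int n + 2*pi"
    using pi_gt_zero by (simp_all add: field_simps)
  then have zr: "-pi \<le> z" "z < pi" unfolding z_def by simp_all
  have Dz: "sqrt q * cos z + 1 = sqrt q * cos x + 1" unfolding z_def cos_per ..
  have Dx: "sqrt q * cos x + 1 \<noteq> 0" using S unfolding is_sol_def x_def by simp
  have sq: "sqrt q > 1" using q1 by simp
  show "sol_j \<rho> q 1 \<psi> \<theta> \<or> sol_j \<rho> q 2 \<psi> \<theta>"
  proof (cases "sqrt q * cos x + 1 > 0")
    case True
    have "z \<noteq> -pi" proof assume "z = -pi" then have "sqrt q * cos z + 1 = 1 - sqrt q" by simp
      then show False using True Dz sq by simp qed
    then have "inI q 1 z" using br1[OF q1, of z] zr True Dz unfolding inI_def by simp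
    then have "\<exists>k::int. inI q 1 (x + 2*pi * of_int k)" unfolding z_def by blast
    then have "sol_j \<rho> q 1 \<psi> \<theta>" using S unfolding sol_j_def branch_iff[of 1, simplified] x_def by auto
    then show ?thesis ..
  next
    case False
    then have neg: "sqrt q * cos z + 1 < 0" unfolding Dz using Dx by linarith
    have "\<exists>k::int. inI q 2 (x + 2*pi * of_int k)"
    proof (cases "z \<le> 0")
      case True
      have "z \<noteq> 0" proof assume "z = 0" then show False using neg sq by simp qed
      then have z2: "0 < z + 2*pi" "z + 2*pi < 2*pi" using True zr by simp_all
      have "sqrt q * cos (z + 2*pi) + 1 < 0" using neg by simp
      then have "inI q 2 (z + 2*pi)" using br2[OF q1, of "z + 2*pi"] z2 unfolding inI_def by simp
      moreover have "z + 2*pi = x + 2*pi * of_int (-n + 1)" unfolding z_def by (simp add: algebra_simps)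
      ultimately show ?thesis by metis
    next
      case False
      then have "inI q 2 z" using br2[OF q1, of z] zr neg unfolding inI_def by simp
      then show ?thesis unfolding z_def by blast
    qed
    then have "sol_j \<rho> q 2 \<psi> \<theta>" using S unfolding sol_j_def branch_iff[of 2, simplified] x_def by auto
    then show ?thesis ..
  qed
next
  assume "sol_j \<rho> q 1 \<psi> \<theta> \<or> sol_j \<rho> q 2 \<psi> \<theta>"
  then show "is_sol \<rho> q \<psi> \<theta>" unfolding sol_j_def by auto
qed

end

context L5 begin

lemma sol_rep: assumes j: "j \<in> {1,2}"
  shows "(\<theta> \<in> {0..<2*pi} \<and> sol_j \<rho> q j \<psi> \<theta>) \<longleftrightarrow> \<theta> = rep (inv (GG j) \<psi>)"
  using sol_char[OF j] rep_unique[of \<theta> "inv (GG j) \<psi>"] by simp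

lemma partA: "card {\<theta> \<in> {0..<2*pi}. is_sol \<rho> q \<psi> \<theta>} = 2 \<and>
            (\<forall>j\<in>{1,2}. \<exists>!\<theta>. \<theta> \<in> {0..<2*pi} \<and> sol_j \<rho> q j \<psi> \<theta>)"
proof
  define t1 where "t1 = rep (inv (GG 1) \<psi>)"
  define t2 where "t2 = rep (inv (GG 2) \<psi>)"
  have j1: "(1::nat) \<in> {1,2}" and j2: "(2::nat) \<in> {1,2}" by simp_all
  note r1 = sol_rep[OF j1, of _ \<psi>, folded t1_def]
  note r2 = sol_rep[OF j2, of _ \<psi>, folded t2_def]
  have "{\<theta> \<in> {0..<2*pi}. is_sol \<rho> q \<psi> \<theta>} = {t1, t2}"
    using r1 r2 sol_split by auto
  moreover have "t1 \<noteq> t2"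
  proof
    assume "t1 = t2"
    then have "sol_j \<rho> q 1 \<psi> t1 \<and> sol_j \<rho> q 2 \<psi> t1" using r1[of t1] r2[of t1] by simp
    then show False using sol_excl by blast
  qed
  ultimately show "card {\<theta> \<in> {0..<2*pi}. is_sol \<rho> q \<psi> \<theta>} = 2" by simp
  show "\<forall>j\<in>{1,2}. \<exists>!\<theta>. \<theta> \<in> {0..<2*pi} \<and> sol_j \<rho> q j \<psi> \<theta>"
  proof
    fix j :: nat assume j: "j \<in> {1,2}"
    show "\<exists>!\<theta>. \<theta> \<in> {0..<2*pi} \<and> sol_j \<rho> q j \<psi> \<theta>" unfolding sol_rep[OF j] by simp
  qed
qed

lemma ang_eq: assumes j: "j \<in> {1,2}"
  shows "ang_T \<rho> q j l \<phi> = rep (inv (GG j) (\<phi> + real (l - 1) * pi))"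
  unfolding ang_T_def using sol_rep[OF j] by (intro the_equality) auto

lemma partC: assumes j: "j \<in> {1,2}"
  shows "bij_betw (circ_T \<rho> q j l) (sphere 0 1) (sphere 0 1) \<and>
            (\<forall>t0 (\<kappa>::int). \<exists>L.
               continuous_on {t0..t0 + 2*pi} L \<and>
               L t0 = ang_T \<rho> q j l t0 + 2 * pi * of_int \<kappa> \<and>
               L (t0 + 2*pi) = ang_T \<rho> q j l t0 + 2 * pi * (of_int \<kappa> + 1) \<and>
               (\<forall>t\<in>{t0..t0 + 2*pi}. cis (L t) = cis (ang_T \<rho> q j l t)) \<and>
               strict_mono_on {t0..t0 + 2*pi} L \<and>
               L C1_differentiable_on {t0<..<t0 + 2*pi})"
proof
  define c where "c = real (l - 1) * pi"
  define P where "P = (\<lambda>\<phi>. inv (GG j) (\<phi> + c))"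
  define P' where "P' = (\<lambda>\<phi>. inverse (GG' j (inv (GG j) (\<phi> + c))))"
  note H = HH[OF j]
  have ang: "ang_T \<rho> q j l \<phi> = rep (P \<phi>)" for \<phi> unfolding ang_eq[OF j] P_def c_def ..
  have circ: "circ_T \<rho> q j l \<eta> = cis (P (Arg \<eta>))" for \<eta>
    unfolding circ_T_def ang cis_rep ..
  have Pmono: "P a < P b" if "a < b" for a b
    unfolding P_def using H(7) that by (simp add: strict_mono_less)
  have Pper: "P (a + 2*pi) = P a + 2*pi" for a
    unfolding P_def using H(8)[of "a + c"] by (simp add: algebra_simps)
  have Pint: "P (a + 2*pi * of_int k) = P a + 2*pi * of_int k" for a k
    by (rule shift_int) (rule Pper)
  have Pinv: "P (GG j \<alpha> - c) = \<alpha>" for \<alpha> unfolding P_def using H(4) by simp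
  have Pder: "DERIV P \<phi> :> P' \<phi>" for \<phi>
    using H(5)[of "\<phi> + c"] unfolding P_def P'_def by (simp add: DERIV_shift)
  have P'c: "continuous_on UNIV P'"
  proof -
    have "continuous_on UNIV ((\<lambda>y. inverse (GG' j (inv (GG j) y))) \<circ> (\<lambda>\<phi>. \<phi> + c))"
      by (rule continuous_on_compose) (auto intro!: continuous_intros continuous_on_subset[OF H(6)])
    then show ?thesis unfolding P'_def comp_def .
  qed
  have sph: "\<eta> \<in> sphere 0 1 \<longleftrightarrow> norm \<eta> = 1" for \<eta> :: complex by simp
  have cisArg: "cis (Arg \<eta>) = \<eta>" if "norm \<eta> = 1" for \<eta>
  proof -
    have "\<eta> \<noteq> 0" using that by auto
    then have "cis (Arg \<eta>) = sgn \<eta>" by (rule cis_Arg)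
    also have "\<dots> = \<eta>" using that by (simp add: sgn_div_norm)
    finally show ?thesis .
  qed
  show "bij_betw (circ_T \<rho> q j l) (sphere 0 1) (sphere 0 1)"
  proof (rule bij_betw_imageI)
    show "inj_on (circ_T \<rho> q j l) (sphere 0 1)"
    proof (rule inj_onI)
      fix \<eta>1 \<eta>2 :: complex
      assume e1: "\<eta>1 \<in> sphere 0 1" and e2: "\<eta>2 \<in> sphere 0 1"
        and eq: "circ_T \<rho> q j l \<eta>1 = circ_T \<rho> q j l \<eta>2"
      define a1 where "a1 = Arg \<eta>1"
      define a2 where "a2 = Arg \<eta>2"
      have b: "-pi < a1" "a1 \<le> pi" "-pi < a2" "a2 \<le> pi" unfolding a1_def a2_def using Arg_bounded by auto
      have "cis (P a1) = cis (P a2)" using eq unfolding circ a1_def a2_def .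
      have no: False if lt: "b1 < b2" "b2 < b1 + 2*pi" "cis (P b1) = cis (P b2)" for b1 b2
      proof -
        obtain n :: int where n: "P b2 = P b1 + 2*pi * of_int n" using cis_eq[OF lt(3)[symmetric]] by blast
        have "P b1 < P b2" using Pmono lt(1) by blast
        moreover have "P b2 < P b1 + 2*pi" using Pmono[OF lt(2)] Pper by simp
        ultimately have A: "0 < 2*pi * of_int n" and B: "2*pi * of_int n < 2*pi" using n by simp_all
        have n1: "0 < n"
        proof (rule ccontr)
          assume "\<not> 0 < n" then have "(of_int n :: real) \<le> 0" by simp
          then have "2*pi * of_int n \<le> 0" by (simp add: mult_nonneg_nonpos)
          then show False using A by simp
        qed
        have n2: "n < 1"
        proof (rule ccontr)
          assume "\<not> n < 1" then have "(1::real) \<le> of_int n" by simp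
          then have "2*pi*1 \<le> 2*pi * of_int n" by (intro mult_left_mono) auto
          then show False using B by simp
        qed
        show False using n1 n2 by simp
      qed
      have "a1 = a2"
      proof (rule linorder_cases[of a1 a2])
        assume "a1 < a2" then show ?thesis using no[of a1 a2] b \<open>cis (P a1) = cis (P a2)\<close> by simp
      next
        assume "a2 < a1" then show ?thesis using no[of a2 a1] b \<open>cis (P a1) = cis (P a2)\<close> by simp
      qed
      then show "\<eta>1 = \<eta>2" using cisArg e1 e2 unfolding a1_def a2_def sph by metis
    qed
    show "circ_T \<rho> q j l ` sphere 0 1 = sphere 0 1"
    proof
      show "circ_T \<rho> q j l ` sphere 0 1 \<subseteq> sphere 0 1" unfolding circ by auto
      show "sphere 0 1 \<subseteq> circ_T \<rho> q j l ` sphere 0 1"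
      proof
        fix \<zeta> :: complex assume z: "\<zeta> \<in> sphere 0 1"
        define \<phi> where "\<phi> = GG j (Arg \<zeta>) - c"
        define \<eta> where "\<eta> = cis \<phi>"
        have "cis (Arg \<eta>) = cis \<phi>" using cisArg[of \<eta>] unfolding \<eta>_def by simp
        then obtain m :: int where m: "Arg \<eta> = \<phi> + 2*pi * of_int m" using cis_eq by blast
        have "circ_T \<rho> q j l \<eta> = cis (P \<phi> + 2*pi * of_int m)" unfolding circ m Pint ..
        also have "\<dots> = cis (Arg \<zeta>)" unfolding cis_shift \<phi>_def Pinv ..
        also have "\<dots> = \<zeta>" using cisArg z by simp
        finally have "\<zeta> = circ_T \<rho> q j l \<eta>" ..
        moreover have "\<eta> \<in> sphere 0 1" unfolding \<eta>_def by simp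
        ultimately show "\<zeta> \<in> circ_T \<rho> q j l ` sphere 0 1" by blast
      qed
    qed
  qed
  show "\<forall>t0 (\<kappa>::int). \<exists>L.
               continuous_on {t0..t0 + 2*pi} L \<and>
               L t0 = ang_T \<rho> q j l t0 + 2 * pi * of_int \<kappa> \<and>
               L (t0 + 2*pi) = ang_T \<rho> q j l t0 + 2 * pi * (of_int \<kappa> + 1) \<and>
               (\<forall>t\<in>{t0..t0 + 2*pi}. cis (L t) = cis (ang_T \<rho> q j l t)) \<and>
               strict_mono_on {t0..t0 + 2*pi} L \<and>
               L C1_differentiable_on {t0<..<t0 + 2*pi}"
  proof (intro allI)
    fix t0 :: real and \<kappa> :: int
    define m where "m = \<kappa> - floor (P t0 / (2*pi))"
    define L where "L = (\<lambda>t. P t + 2*pi * of_int m)"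
    have Lder: "DERIV L t :> P' t" for t unfolding L_def
      using Pder[of t] by (auto intro!: derivative_eq_intros)
    have a0: "ang_T \<rho> q j l t0 = P t0 - 2*pi * of_int (floor (P t0 / (2*pi)))"
      unfolding ang rep_def ..
    have "continuous_on {t0..t0 + 2*pi} L"
      using Lder DERIV_isCont by (blast intro: continuous_at_imp_continuous_on)
    moreover have "L t0 = ang_T \<rho> q j l t0 + 2 * pi * of_int \<kappa>"
      unfolding a0 L_def m_def by (simp add: algebra_simps)
    moreover have "L (t0 + 2*pi) = ang_T \<rho> q j l t0 + 2 * pi * (of_int \<kappa> + 1)"
      unfolding a0 L_def m_def Pper by (simp add: algebra_simps)
    moreover have "\<forall>t\<in>{t0..t0 + 2*pi}. cis (L t) = cis (ang_T \<rho> q j l t)"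
      unfolding L_def ang cis_rep cis_shift by simp
    moreover have "strict_mono_on {t0..t0 + 2*pi} L"
      unfolding L_def by (rule strict_mono_onI) (use Pmono in simp)
    moreover have "L C1_differentiable_on {t0<..<t0 + 2*pi}"
    proof -
      have "L C1_differentiable_on UNIV"
        unfolding C1_differentiable_on_def
        using Lder P'c by (auto simp: has_real_derivative_iff_has_vector_derivative[symmetric])
      then show ?thesis by (rule C1_differentiable_on_subset) simp
    qed
    ultimately show "\<exists>L.
               continuous_on {t0..t0 + 2*pi} L \<and>
               L t0 = ang_T \<rho> q j l t0 + 2 * pi * of_int \<kappa> \<and>
               L (t0 + 2*pi) = ang_T \<rho> q j l t0 + 2 * pi * (of_int \<kappa> + 1) \<and>
               (\<forall>t\<in>{t0..t0 + 2*pi}. cis (L t) = cis (ang_T \<rho> q j l t)) \<and>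
               strict_mono_on {t0..t0 + 2*pi} L \<and>
               L C1_differentiable_on {t0<..<t0 + 2*pi}" by blast
  qed
qed

end

theorem lemma5:
  fixes q :: real and \<rho> :: "real \<Rightarrow> real"
  assumes "q > 1"
    and "\<forall>t. \<rho> t > 0"
    and "\<forall>t. \<rho> (t + 2 * pi) = \<rho> t"
    and "\<rho> C1_differentiable_on UNIV"
    and "deriv \<rho> C1_differentiable_on UNIV"
    and "\<forall>t. deriv (deriv (\<lambda>s. ln (\<rho> s))) t < sqrt q / (1 + sqrt q)"
  shows "(\<forall>\<psi>. card {\<theta> \<in> {0..<2*pi}. is_sol \<rho> q \<psi> \<theta>} = 2 \<and>
            (\<forall>j\<in>{1,2}. \<exists>!\<theta>. \<theta> \<in> {0..<2*pi} \<and> sol_j \<rho> q j \<psi> \<theta>))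
       \<and> (\<forall>j\<in>{1,2}. \<forall>l\<in>{1,2}.
            bij_betw (circ_T \<rho> q j l) (sphere 0 1) (sphere 0 1) \<and>
            (\<forall>t0 (\<kappa>::int). \<exists>L.
               continuous_on {t0..t0 + 2*pi} L \<and>
               L t0 = ang_T \<rho> q j l t0 + 2 * pi * of_int \<kappa> \<and>
               L (t0 + 2*pi) = ang_T \<rho> q j l t0 + 2 * pi * (of_int \<kappa> + 1) \<and>
               (\<forall>t\<in>{t0..t0 + 2*pi}. cis (L t) = cis (ang_T \<rho> q j l t)) \<and>
               strict_mono_on {t0..t0 + 2*pi} L \<and>
               L C1_differentiable_on {t0<..<t0 + 2*pi}))"
proof -
  interpret L5 q \<rho> using assms by unfold_locales
  show ?thesis using partA partC by blast
qed

end
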